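(* Let $\varepsilon>0$ and let $r,s\in\mathbb{C}\setminus\{0\}$ with $s/r\notin\mathbb{R}$. Then for all piecewise continuous functions $\mathbf{f},\mathbf{g}:[a,b]\to\mathbb{C}^d$ and all $t\in[a,b]$, \[ \Box^{[r,s]}_\varepsilon(\mathbf f\cdot\mathbf g)(t)=\mathbf f(t)\cdot\Box^{[r,s]}_\varepsilon\mathbf g(t)+\mathbf g(t)\cdot\Box^{[r,s]}_\varepsilon\mathbf f(t) +\frac{\varepsilon(r\bar s^2-\bar r^2 s)}{(r\bar s-\bar r s)^2}\,\Box^{[r,s]}_\varepsilon\mathbf f(t)\cdot\Box^{[r,s]}_\varepsilon\mathbf g(t) -\frac{\varepsilon rs(r-s)}{(r\bar s-\bar r s)^2}\,\Box^{[\bar r,\bar s]}_\varepsilon\mathbf f(t)\cdot\Box^{[\bar r,\bar s]}_\varepsilon\mathbf g(t) +\frac{\varepsilon rs(\bar r-\bar s)}{(r\bar s-\bar r s)^2}\Big(\Box^{[r,s]}_\varepsilon\mathbf f(t)\cdot\Box^{[\bar r,\bar s]}_\varepsilon\mathbf g(t)+\Box^{[\bar r,\bar s]}_\varepsilon\mathbf f(t)\cdot\Box^{[r,s]}_\varepsilon\mathbf g(t)\Big). \]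
   Context: Fix an interval $[a,b]$ and a time step $\varepsilon>0$. For each integer $\ell$, $\chi_\ell$ denotes the characteristic (indicator) function of the interval $[\max(a,a+\ell\varepsilon),\min(b,b+\ell\varepsilon)]$. For $r,s\in\mathbb{C}$ and a function $\mathbf x:[a,b]\to\mathbb{C}^d$, the operator $\Box^{[r,s]}_\varepsilon$ is defined for $t\in[a,b]$ by \[ \Box^{[r,s]}_\varepsilon\mathbf x(t)=-\chi_{1}(t)\frac{s}{\varepsilon}\mathbf x(t-\varepsilon)+\frac{s-r}{\varepsilon}\mathbf x(t)+\chi_{-1}(t)\frac{r}{\varepsilon}\mathbf x(t+\varepsilon), \] with the convention that a term multiplied by a vanishing characteristic function is $0$ (even if the argument lies outside $[a,b]$). The operator acts componentwise on vector-valued functions and also applies to scalar functions. Here $\mathbf f\cdot\mathbf g=\sum_{j=1}^d f_jg_j$ is the bilinear (non-conjugated) dot product, and $\bar r$ denotes complex conjugation. *)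

theory Defs
  imports "HOL-Analysis.Analysis"
begin

definition piecewise_continuous_on ::
  "real \<Rightarrow> real \<Rightarrow> (real \<Rightarrow> 'b::topological_space) \<Rightarrow> bool" where
  "piecewise_continuous_on a b f \<longleftrightarrow>
     (\<exists>S. finite S \<and> continuous_on ({a..b} - S) f \<and>
        (\<forall>x\<in>S \<inter> {a..b}.
           (a < x \<longrightarrow> (\<exists>l. (f \<longlongrightarrow> l) (at_left x))) \<and>
           (x < b \<longrightarrow> (\<exists>l. (f \<longlongrightarrow> l) (at_right x)))))"

text \<open>Support interval of the characteristic function \<chi>_l.\<close>
definition chi_set :: "real \<Rightarrow> real \<Rightarrow> real \<Rightarrow> int \<Rightarrow> real set" where
  "chi_set a b eps l = {max a (a + of_int l * eps) .. min b (b + of_int l * eps)}"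

text \<open>The operator on scalar functions (terms with vanishing \<chi> are 0).\<close>
definition box_scalar ::
  "real \<Rightarrow> real \<Rightarrow> real \<Rightarrow> complex \<Rightarrow> complex \<Rightarrow> (real \<Rightarrow> complex) \<Rightarrow> real \<Rightarrow> complex" where
  "box_scalar a b eps r s x t =
     (if t \<in> chi_set a b eps 1 then - (s / complex_of_real eps) * x (t - eps) else 0)
     + ((s - r) / complex_of_real eps) * x t
     + (if t \<in> chi_set a b eps (-1) then (r / complex_of_real eps) * x (t + eps) else 0)"

definition box_vec ::
  "real \<Rightarrow> real \<Rightarrow> real \<Rightarrow> complex \<Rightarrow> complex \<Rightarrow> (real \<Rightarrow> complex ^ 'd) \<Rightarrow> real \<Rightarrow> complex ^ 'd" where
  "box_vec a b eps r s x t = (\<chi> i. box_scalar a b eps r s (\<lambda>u. x u $ i) t)"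

definition bdot :: "complex ^ 'd \<Rightarrow> complex ^ 'd \<Rightarrow> complex" where
  "bdot u v = (\<Sum>i\<in>UNIV. u $ i * v $ i)"

end

theory Submission
  imports Defs
begin

lemma core:
  fixes r s rc sc ep A B C A' B' C' :: complex and P Q :: bool
  assumes ep: "ep \<noteq> 0" and D: "r * sc - rc * s \<noteq> 0"
  defines "bx \<equiv> \<lambda>r s A B C. (if P then - (s / ep) * A else 0) + ((s - r) / ep) * B + (if Q then (r / ep) * C else 0)"
  shows "bx r s (A*A') (B*B') (C*C') = B * bx r s A' B' C' + B' * bx r s A B C
     + (ep * (r * sc^2 - rc^2 * s) / (r * sc - rc * s)^2) * (bx r s A B C * bx r s A' B' C')
     - (ep * r * s * (r - s) / (r * sc - rc * s)^2) * (bx rc sc A B C * bx rc sc A' B' C')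
     + (ep * r * s * (rc - sc) / (r * sc - rc * s)^2) * (bx r s A B C * bx rc sc A' B' C' + bx rc sc A B C * bx r s A' B' C')"
  using ep D unfolding bx_def
  by (cases P; cases Q; simp add: field_simps; algebra)

lemma nz: fixes r s :: complex assumes "r \<noteq> 0" "s / r \<notin> \<real>" shows "r * cnj s - cnj r * s \<noteq> 0"
proof
  assume h: "r * cnj s - cnj r * s = 0"
  hence "cnj (r * cnj s) = r * cnj s" by simp
  hence R: "r * cnj s \<in> \<real>" using Reals_cnj_iff by metis
  have "s / r = cnj (r * cnj s) / (r * cnj r)" using assms(1) by (simp add: field_simps)
  also have "r * cnj r = of_real ((cmod r)^2)" by (rule complex_norm_square[symmetric])
  finally have "s / r = cnj (r * cnj s) / of_real ((cmod r)^2)" .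
  moreover have "cnj (r * cnj s) \<in> \<real>" using R by (simp add: Reals_cnj_iff)
  ultimately show False using assms(2) by (metis Reals_divide Reals_of_real)
qed

theorem mainTheorem1:
  fixes a b eps :: real and r s :: complex
    and f g :: "real \<Rightarrow> complex ^ 'd"
  assumes "eps > 0" and "r \<noteq> 0" and "s \<noteq> 0" and "s / r \<notin> \<real>"
    and "piecewise_continuous_on a b f" and "piecewise_continuous_on a b g"
    and "t \<in> {a..b}"
  shows "box_scalar a b eps r s (\<lambda>u. bdot (f u) (g u)) t =
     bdot (f t) (box_vec a b eps r s g t) + bdot (g t) (box_vec a b eps r s f t)
     + (of_real eps * (r * (cnj s)^2 - (cnj r)^2 * s) / (r * cnj s - cnj r * s)^2)
         * bdot (box_vec a b eps r s f t) (box_vec a b eps r s g t)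
     - (of_real eps * r * s * (r - s) / (r * cnj s - cnj r * s)^2)
         * bdot (box_vec a b eps (cnj r) (cnj s) f t) (box_vec a b eps (cnj r) (cnj s) g t)
     + (of_real eps * r * s * (cnj r - cnj s) / (r * cnj s - cnj r * s)^2)
         * (bdot (box_vec a b eps r s f t) (box_vec a b eps (cnj r) (cnj s) g t)
            + bdot (box_vec a b eps (cnj r) (cnj s) f t) (box_vec a b eps r s g t))"
  proof -
  let ?e = "complex_of_real eps"
  have e: "?e \<noteq> 0" using assms(1) by simp
  have D: "r * cnj s - cnj r * s \<noteq> 0" using nz assms(2,4) by blast
  have lin: "box_scalar a b eps r s (\<lambda>u. \<Sum>i\<in>UNIV. h i u) t = (\<Sum>i\<in>UNIV. box_scalar a b eps r s (h i) t)"
    for h :: "'d \<Rightarrow> real \<Rightarrow> complex"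
    unfolding box_scalar_def
    by (cases "t \<in> chi_set a b eps 1"; cases "t \<in> chi_set a b eps (-1)"; simp add: sum.distrib sum_distrib_left sum_subtractf sum_negf algebra_simps sum_divide_distrib[symmetric])
  have comp: "\<And>i. box_scalar a b eps r s (\<lambda>u. f u $ i * g u $ i) t =
     f t $ i * box_vec a b eps r s g t $ i + g t $ i * box_vec a b eps r s f t $ i
     + (of_real eps * (r * (cnj s)^2 - (cnj r)^2 * s) / (r * cnj s - cnj r * s)^2)
         * (box_vec a b eps r s f t $ i * box_vec a b eps r s g t $ i)
     - (of_real eps * r * s * (r - s) / (r * cnj s - cnj r * s)^2)
         * (box_vec a b eps (cnj r) (cnj s) f t $ i * box_vec a b eps (cnj r) (cnj s) g t $ i)
     + (of_real eps * r * s * (cnj r - cnj s) / (r * cnj s - cnj r * s)^2)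
         * (box_vec a b eps r s f t $ i * box_vec a b eps (cnj r) (cnj s) g t $ i
            + box_vec a b eps (cnj r) (cnj s) f t $ i * box_vec a b eps r s g t $ i)"
  proof -
    fix i
    show "?thesis i"
      unfolding box_vec_def box_scalar_def vec_lambda_beta by (rule core[where P="t \<in> chi_set a b eps 1" and Q="t \<in> chi_set a b eps (-1)"
        and A="f (t - eps) $ i" and A'="g (t - eps) $ i" and B="f t $ i" and B'="g t $ i"
        and C="f (t + eps) $ i" and C'="g (t + eps) $ i", OF e D])
  qed
  show ?thesis
    unfolding bdot_def lin comp
    by (simp only: sum.distrib sum_subtractf sum_distrib_left[symmetric])
qed

end
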